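(* Let $\mathfrak M\models S_{\overline\alpha}^\forall$ and $\mathfrak A,\mathfrak B\in K_{\overline\alpha}$ with $\mathfrak B\cap\mathfrak M=\mathfrak A$ (so $\mathfrak A$ is a common substructure of $\mathfrak M$ and $\mathfrak B$), and let $\mathfrak N=\mathfrak M\oplus_{\mathfrak A}\mathfrak B$. (1) If $\mathfrak A\le\mathfrak B$ or $\mathfrak A\le\mathfrak M$, then $\mathfrak N\models S_{\overline\alpha}^\forall$. (2) If $\mathfrak A\le\mathfrak B$, then $\mathfrak N$ preserves closures for $\mathfrak M$. (3) If $\mathfrak A\le\mathfrak M$, then $\mathfrak B\le\mathfrak N$. (4) If ($\mathfrak A\le\mathfrak B$ or $\mathfrak A\le\mathfrak M$) and $\mathfrak M$ has finite closures, then $\mathfrak N$ has finite closures.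
   Context: Fix a finite relational language $L$ in which every relation symbol has arity at least $2$. $K_L$ is the class of all finite $L$-structures (including the empty one) in which every relation symbol is interpreted symmetrically and irreflexively. Fix $\overline\alpha:L\to(0,1]$, writing $\overline\alpha_E=\overline\alpha(E)$, such that it is not the case that all symbols of $L$ are binary and $\overline\alpha_E=1$ for all $E$. For $\mathfrak A\in K_L$ let $N_E(\mathfrak A)$ be the number of subsets of $A$ on which $E$ holds and $\delta(\mathfrak A)=|A|-\sum_{E}\overline\alpha_E N_E(\mathfrak A)$; subsets of a structure are identified with induced substructures. $K_{\overline\alpha}=\{\mathfrak A\in K_L:\delta(\mathfrak A')\ge0\text{ for all substructures }\mathfrak A'\subseteq\mathfrak A\}$. For $\mathfrak A\subseteq\mathfrak B$ in $K_L$, $\mathfrak A\le\mathfrak B$ means $\delta(\mathfrak A)\le\delta(\mathfrak A')$ for all $\mathfrak A\subseteq\mathfrak A'\subseteq\mathfrak B$; for finite $\mathfrak A\subseteq\mathfrak X$ with $\mathfrak X$ arbitrary, $\mathfrak A\le\mathfrak X$ means $\mathfrak A\le\mathfrak C$ for all finite $\mathfrak A\subseteq\mathfrak C\subseteq\mathfrak X$. $(\mathfrak A,\mathfrak B)$ is a minimal pair if $\mathfrak A\subseteq\mathfrak B$, $\mathfrak A\le\mathfrak C$ for all $\mathfrak A\subseteq\mathfrak C\subsetneq\mathfrak B$, but $\mathfrak A\not\le\mathfrak B$. A subset $X$ of a structure $\mathfrak Z$ is closed in $\mathfrak Z$ if for every finite $A\subseteq X$ and every minimal pair $(A,B)$ with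 $B\subseteq Z$, $B\subseteq X$. $S_{\overline\alpha}$ is the theory whose models are those structures in which every finite substructure lies in $K_{\overline\alpha}$ and, for all $\mathfrak A\le\mathfrak B$ in $K_{\overline\alpha}$, every embedding of $\mathfrak A$ extends to an embedding of $\mathfrak B$; $S_{\overline\alpha}^\forall$ is the set of universal sentences of $S_{\overline\alpha}$ (its models are the $L$-structures all of whose finite substructures lie in $K_{\overline\alpha}$). The free join $\mathfrak M\oplus_{\mathfrak A}\mathfrak B$ is the structure with universe $M\cup B$ whose relations are exactly $E^{\mathfrak M}\cup E^{\mathfrak B}$ for each $E\in L$. For $\mathfrak M\subseteq\mathfrak N$, $\mathfrak N$ preserves closures for $\mathfrak M$ if every $X\subseteq M$ closed in $\mathfrak M$ is closed in $\mathfrak N$. A structure has finite closures if each of its finite subsets is contained in a finite subset strong in the structure. *)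

theory Defs
  imports Complex_Main
begin

text \<open>
  The language is a finite set L of relation symbols (type 'l) with
  arities ar :: 'l => nat and weights alpha :: 'l => real.  A symmetric irreflexive
  relation of arity k is identified with the set of k-element subsets on which it holds.
  An L-structure with universe U is given by R :: 'l => 'a set set, where R E is the set
  of (ar E)-element subsets of U on which E holds.  Subsets of a structure are identified
  with induced substructures.
\<close>

definition is_struct :: "'l set \<Rightarrow> ('l \<Rightarrow> nat) \<Rightarrow> 'a set \<Rightarrow> ('l \<Rightarrow> 'a set set) \<Rightarrow> bool" where
  "is_struct L ar U R \<longleftrightarrow> (\<forall>E. \<forall>s\<in>R E. E \<in> L \<and> s \<subseteq> U \<and> card s = ar E)"

definition induced :: "('l \<Rightarrow> 'a set set) \<Rightarrow> 'a set \<Rightarrow> ('l \<Rightarrow> 'a set set)" where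
  "induced R X = (\<lambda>E. {s \<in> R E. s \<subseteq> X})"

definition is_substr :: "'a set \<Rightarrow> ('l \<Rightarrow> 'a set set) \<Rightarrow> 'a set \<Rightarrow> ('l \<Rightarrow> 'a set set) \<Rightarrow> bool" where
  "is_substr UA RA U R \<longleftrightarrow> UA \<subseteq> U \<and> RA = induced R UA"

definition delta :: "'l set \<Rightarrow> ('l \<Rightarrow> real) \<Rightarrow> ('l \<Rightarrow> 'a set set) \<Rightarrow> 'a set \<Rightarrow> real" where
  "delta L alpha R A = real (card A) - (\<Sum>E\<in>L. alpha E * real (card {s \<in> R E. s \<subseteq> A}))"

definition in_K :: "'l set \<Rightarrow> ('l \<Rightarrow> nat) \<Rightarrow> ('l \<Rightarrow> real) \<Rightarrow> 'a set \<Rightarrow> ('l \<Rightarrow> 'a set set) \<Rightarrow> bool" where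
  "in_K L ar alpha U R \<longleftrightarrow> is_struct L ar U R \<and> finite U \<and>
     (\<forall>X. X \<subseteq> U \<longrightarrow> 0 \<le> delta L alpha (induced R X) X)"

definition models_Sforall :: "'l set \<Rightarrow> ('l \<Rightarrow> nat) \<Rightarrow> ('l \<Rightarrow> real) \<Rightarrow> 'a set \<Rightarrow> ('l \<Rightarrow> 'a set set) \<Rightarrow> bool" where
  "models_Sforall L ar alpha U R \<longleftrightarrow> is_struct L ar U R \<and>
     (\<forall>X. X \<subseteq> U \<and> finite X \<longrightarrow> in_K L ar alpha X (induced R X))"

definition strong :: "'l set \<Rightarrow> ('l \<Rightarrow> real) \<Rightarrow> ('l \<Rightarrow> 'a set set) \<Rightarrow> 'a set \<Rightarrow> 'a set \<Rightarrow> bool" where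
  "strong L alpha R A X \<longleftrightarrow> A \<subseteq> X \<and> finite A \<and>
     (\<forall>C. A \<subseteq> C \<and> C \<subseteq> X \<and> finite C \<longrightarrow> delta L alpha R A \<le> delta L alpha R C)"

definition min_pair :: "'l set \<Rightarrow> ('l \<Rightarrow> real) \<Rightarrow> ('l \<Rightarrow> 'a set set) \<Rightarrow> 'a set \<Rightarrow> 'a set \<Rightarrow> bool" where
  "min_pair L alpha R A B \<longleftrightarrow> A \<subseteq> B \<and> finite B \<and>
     (\<forall>C. A \<subseteq> C \<and> C \<subset> B \<longrightarrow> strong L alpha R A C) \<and> \<not> strong L alpha R A B"

definition closed_in :: "'l set \<Rightarrow> ('l \<Rightarrow> real) \<Rightarrow> 'a set \<Rightarrow> ('l \<Rightarrow> 'a set set) \<Rightarrow> 'a set \<Rightarrow> bool" where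
  "closed_in L alpha U R X \<longleftrightarrow> X \<subseteq> U \<and>
     (\<forall>A B. A \<subseteq> X \<and> finite A \<and> B \<subseteq> U \<and> min_pair L alpha R A B \<longrightarrow> B \<subseteq> X)"

definition preserves_closures :: "'l set \<Rightarrow> ('l \<Rightarrow> real) \<Rightarrow> 'a set \<Rightarrow> ('l \<Rightarrow> 'a set set)
    \<Rightarrow> 'a set \<Rightarrow> ('l \<Rightarrow> 'a set set) \<Rightarrow> bool" where
  "preserves_closures L alpha UM RM UNN RNN \<longleftrightarrow>
     (\<forall>X. X \<subseteq> UM \<and> closed_in L alpha UM RM X \<longrightarrow> closed_in L alpha UNN RNN X)"

definition finite_closures :: "'l set \<Rightarrow> ('l \<Rightarrow> real) \<Rightarrow> 'a set \<Rightarrow> ('l \<Rightarrow> 'a set set) \<Rightarrow> bool" where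
  "finite_closures L alpha U R \<longleftrightarrow>
     (\<forall>F. F \<subseteq> U \<and> finite F \<longrightarrow> (\<exists>G. F \<subseteq> G \<and> G \<subseteq> U \<and> finite G \<and> strong L alpha R G U))"

text \<open>Relations of the free join M \<oplus>_A B (universe UM \<union> UB).\<close>
definition join_rel :: "('l \<Rightarrow> 'a set set) \<Rightarrow> ('l \<Rightarrow> 'a set set) \<Rightarrow> ('l \<Rightarrow> 'a set set)" where
  "join_rel RM RB = (\<lambda>E. RM E \<union> RB E)"

end

theory Submission
  imports Defs
begin

lemma fin_sub: "finite Y \<Longrightarrow> finite {s \<in> R E. s \<subseteq> Y}"
  by (rule finite_subset[of _ "Pow Y"]) auto

lemma delta_induced:
  assumes "Y \<subseteq> X"
  shows "delta L alpha (induced R X) Y = delta L alpha R Y"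
proof -
  have "\<And>E. {s \<in> induced R X E. s \<subseteq> Y} = {s \<in> R E. s \<subseteq> Y}"
    using assms unfolding induced_def by auto
  then show ?thesis unfolding delta_def by simp
qed

lemma submod:
  assumes "finite X" "finite Y" "\<forall>E\<in>L. 0 \<le> alpha E"
  shows "delta L alpha R (X \<union> Y) + delta L alpha R (X \<inter> Y) \<le> delta L alpha R X + delta L alpha R Y"
proof -
  have c: "card (X \<union> Y) + card (X \<inter> Y) = card X + card Y"
    using card_Un_Int[OF assms(1,2)] by simp
  have e: "alpha E * real (card {s \<in> R E. s \<subseteq> X}) + alpha E * real (card {s \<in> R E. s \<subseteq> Y})
      \<le> alpha E * real (card {s \<in> R E. s \<subseteq> X \<union> Y}) + alpha E * real (card {s \<in> R E. s \<subseteq> X \<inter> Y})"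
    if "E \<in> L" for E
  proof -
    let ?P = "{s \<in> R E. s \<subseteq> X}" and ?Q = "{s \<in> R E. s \<subseteq> Y}"
    have fP: "finite ?P" and fQ: "finite ?Q" using fin_sub assms by auto
    have "card ?P + card ?Q = card (?P \<union> ?Q) + card (?P \<inter> ?Q)"
      using card_Un_Int[OF fP fQ] .
    moreover have "?P \<inter> ?Q = {s \<in> R E. s \<subseteq> X \<inter> Y}" by auto
    moreover have "card (?P \<union> ?Q) \<le> card {s \<in> R E. s \<subseteq> X \<union> Y}"
      by (rule card_mono) (use fin_sub assms in auto)
    ultimately have "card ?P + card ?Q \<le> card {s \<in> R E. s \<subseteq> X \<union> Y} + card {s \<in> R E. s \<subseteq> X \<inter> Y}"
      by simp
    hence "real (card ?P) + real (card ?Q) \<le> real (card {s \<in> R E. s \<subseteq> X \<union> Y}) + real (card {s \<in> R E. s \<subseteq> X \<inter> Y})"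
      by linarith
    moreover have "0 \<le> alpha E" using assms that by auto
    ultimately show ?thesis
      by (simp only: distrib_left[symmetric] mult_left_mono)
  qed
  have "(\<Sum>E\<in>L. alpha E * real (card {s \<in> R E. s \<subseteq> X})) + (\<Sum>E\<in>L. alpha E * real (card {s \<in> R E. s \<subseteq> Y}))
     \<le> (\<Sum>E\<in>L. alpha E * real (card {s \<in> R E. s \<subseteq> X \<union> Y})) + (\<Sum>E\<in>L. alpha E * real (card {s \<in> R E. s \<subseteq> X \<inter> Y}))"
    unfolding sum.distrib[symmetric] by (rule sum_mono) (rule e)
  moreover have "real (card (X \<union> Y)) + real (card (X \<inter> Y)) = real (card X) + real (card Y)"
    using arg_cong[OF c, of real] by simp
  ultimately show ?thesis unfolding delta_def by linarith
qed

lemma strong_key: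
  assumes "strong L alpha R A U" "Z \<subseteq> U" "finite Z" "\<forall>E\<in>L. 0 \<le> alpha E"
  shows "delta L alpha R (Z \<inter> A) \<le> delta L alpha R Z"
proof -
  have fA: "finite A" "A \<subseteq> U" using assms(1) unfolding strong_def by auto
  have "delta L alpha R (Z \<union> A) + delta L alpha R (Z \<inter> A) \<le> delta L alpha R Z + delta L alpha R A"
    using submod[OF assms(3) fA(1) assms(4)] .
  moreover have "delta L alpha R A \<le> delta L alpha R (Z \<union> A)"
    using assms(1) assms(2,3) fA unfolding strong_def by auto
  ultimately show ?thesis by linarith
qed

lemma delta_eq_A:
  assumes "induced RM UA = induced RB UA" "Z \<subseteq> UA"
  shows "delta L alpha RB Z = delta L alpha RM Z"
proof -
  have "\<And>E. {s \<in> RB E. s \<subseteq> Z} = {s \<in> RM E. s \<subseteq> Z}"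
  proof -
    fix E
    have "induced RM UA E = induced RB UA E" using assms(1) by simp
    then show "{s \<in> RB E. s \<subseteq> Z} = {s \<in> RM E. s \<subseteq> Z}"
      using assms(2) unfolding induced_def by blast
  qed
  then show ?thesis unfolding delta_def by simp
qed

lemma delta_join_M:
  assumes "is_struct L ar UB RB" "induced RM UA = induced RB UA" "UB \<inter> UM = UA" "Z \<subseteq> UM"
  shows "delta L alpha (join_rel RM RB) Z = delta L alpha RM Z"
proof -
  have "\<And>E. {s \<in> join_rel RM RB E. s \<subseteq> Z} = {s \<in> RM E. s \<subseteq> Z}"
  proof -
    fix E
    have i: "induced RM UA E = induced RB UA E" using assms(2) by simp
    have "\<forall>s\<in>RB E. s \<subseteq> UB" using assms(1) unfolding is_struct_def by auto
    then show "{s \<in> join_rel RM RB E. s \<subseteq> Z} = {s \<in> RM E. s \<subseteq> Z}"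
      using i assms(3,4) unfolding induced_def join_rel_def by blast
  qed
  then show ?thesis unfolding delta_def by simp
qed

lemma delta_join:
  assumes "is_struct L ar UM RM" "is_struct L ar UB RB" "induced RM UA = induced RB UA"
    "UB \<inter> UM = UA" "finite Y" "Y \<subseteq> UM \<union> UB"
  shows "delta L alpha (join_rel RM RB) Y + delta L alpha RM (Y \<inter> UA)
       = delta L alpha RM (Y \<inter> UM) + delta L alpha RB (Y \<inter> UB)"
proof -
  have c: "card Y + card (Y \<inter> UA) = card (Y \<inter> UM) + card (Y \<inter> UB)"
  proof -
    have "Y = (Y \<inter> UM) \<union> (Y \<inter> UB)" using assms(6) by auto
    moreover have "(Y \<inter> UM) \<inter> (Y \<inter> UB) = Y \<inter> UA" using assms(4) by auto
    ultimately show ?thesis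
      using card_Un_Int[of "Y \<inter> UM" "Y \<inter> UB"] assms(5) by auto
  qed
  have e: "card {s \<in> join_rel RM RB E. s \<subseteq> Y} + card {s \<in> RM E. s \<subseteq> Y \<inter> UA}
     = card {s \<in> RM E. s \<subseteq> Y \<inter> UM} + card {s \<in> RB E. s \<subseteq> Y \<inter> UB}" for E
  proof -
    let ?P = "{s \<in> RM E. s \<subseteq> Y \<inter> UM}" and ?Q = "{s \<in> RB E. s \<subseteq> Y \<inter> UB}"
    have fP: "finite ?P" and fQ: "finite ?Q" using fin_sub assms(5) by auto
    have i: "induced RM UA E = induced RB UA E" using assms(3) by simp
    have sM: "\<forall>s\<in>RM E. s \<subseteq> UM" using assms(1) unfolding is_struct_def by auto
    have sB: "\<forall>s\<in>RB E. s \<subseteq> UB" using assms(2) unfolding is_struct_def by auto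
    have u: "?P \<union> ?Q = {s \<in> join_rel RM RB E. s \<subseteq> Y}"
      using sM sB unfolding join_rel_def by blast
    have n: "?P \<inter> ?Q = {s \<in> RM E. s \<subseteq> Y \<inter> UA}"
      using sM sB i assms(4) unfolding induced_def by blast
    show ?thesis using card_Un_Int[OF fP fQ] u n by simp
  qed
  have "(\<Sum>E\<in>L. alpha E * real (card {s \<in> join_rel RM RB E. s \<subseteq> Y})) + (\<Sum>E\<in>L. alpha E * real (card {s \<in> RM E. s \<subseteq> Y \<inter> UA}))
     = (\<Sum>E\<in>L. alpha E * real (card {s \<in> RM E. s \<subseteq> Y \<inter> UM})) + (\<Sum>E\<in>L. alpha E * real (card {s \<in> RB E. s \<subseteq> Y \<inter> UB}))"
  proof -
    have "\<And>E. alpha E * real (card {s \<in> join_rel RM RB E. s \<subseteq> Y}) + alpha E * real (card {s \<in> RM E. s \<subseteq> Y \<inter> UA})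
       = alpha E * real (card {s \<in> RM E. s \<subseteq> Y \<inter> UM}) + alpha E * real (card {s \<in> RB E. s \<subseteq> Y \<inter> UB})"
    proof -
      fix E
      have "real (card {s \<in> join_rel RM RB E. s \<subseteq> Y}) + real (card {s \<in> RM E. s \<subseteq> Y \<inter> UA})
         = real (card {s \<in> RM E. s \<subseteq> Y \<inter> UM}) + real (card {s \<in> RB E. s \<subseteq> Y \<inter> UB})"
        using arg_cong[OF e[of E], of real] by simp
      then show "alpha E * real (card {s \<in> join_rel RM RB E. s \<subseteq> Y}) + alpha E * real (card {s \<in> RM E. s \<subseteq> Y \<inter> UA})
       = alpha E * real (card {s \<in> RM E. s \<subseteq> Y \<inter> UM}) + alpha E * real (card {s \<in> RB E. s \<subseteq> Y \<inter> UB})"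
        by (simp only: distrib_left[symmetric])
    qed
    then show ?thesis by (simp only: sum.distrib[symmetric])
  qed
  moreover have "real (card Y) + real (card (Y \<inter> UA)) = real (card (Y \<inter> UM)) + real (card (Y \<inter> UB))"
    using arg_cong[OF c, of real] by simp
  ultimately show ?thesis unfolding delta_def by linarith
qed

theorem lemma5p11:
  fixes L :: "'l set" and ar :: "'l \<Rightarrow> nat" and alpha :: "'l \<Rightarrow> real"
    and UM UA UB :: "'a set" and RM RA RB :: "'l \<Rightarrow> 'a set set"
  assumes "finite L"
    and "\<forall>E\<in>L. 2 \<le> ar E"
    and "\<forall>E\<in>L. 0 < alpha E \<and> alpha E \<le> 1"
    and "\<not> (\<forall>E\<in>L. ar E = 2 \<and> alpha E = 1)"
    and "models_Sforall L ar alpha UM RM"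
    and "in_K L ar alpha UA RA"
    and "in_K L ar alpha UB RB"
    and "UB \<inter> UM = UA"
    and "is_substr UA RA UM RM"
    and "is_substr UA RA UB RB"
  shows "((strong L alpha RB UA UB \<or> strong L alpha RM UA UM)
            \<longrightarrow> models_Sforall L ar alpha (UM \<union> UB) (join_rel RM RB))
       \<and> (strong L alpha RB UA UB
            \<longrightarrow> preserves_closures L alpha UM RM (UM \<union> UB) (join_rel RM RB))
       \<and> (strong L alpha RM UA UM
            \<longrightarrow> strong L alpha (join_rel RM RB) UB (UM \<union> UB))
       \<and> ((strong L alpha RB UA UB \<or> strong L alpha RM UA UM) \<and> finite_closures L alpha UM RM
            \<longrightarrow> finite_closures L alpha (UM \<union> UB) (join_rel RM RB))"
proof -
  let ?J = "join_rel RM RB" and ?N = "UM \<union> UB"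
  have sM: "is_struct L ar UM RM" using assms(5) unfolding models_Sforall_def by auto
  have sB: "is_struct L ar UB RB" and fB: "finite UB" using assms(7) unfolding in_K_def by auto
  have fA: "finite UA" using assms(6) unfolding in_K_def by auto
  have AM: "UA \<subseteq> UM" and AB: "UA \<subseteq> UB" using assms(8) by auto
  have ind: "induced RM UA = induced RB UA" using assms(9,10) unfolding is_substr_def by auto
  have al: "\<forall>E\<in>L. 0 \<le> alpha E" using assms(3) by auto
  have sJ: "is_struct L ar ?N ?J" using sM sB unfolding is_struct_def join_rel_def by blast
  have D: "delta L alpha ?J Y + delta L alpha RM (Y \<inter> UA)
       = delta L alpha RM (Y \<inter> UM) + delta L alpha RB (Y \<inter> UB)"
    if "finite Y" "Y \<subseteq> ?N" for Y
    using delta_join[OF sM sB ind assms(8) that] .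
  have dBA: "delta L alpha RB Z = delta L alpha RM Z" if "Z \<subseteq> UA" for Z
    using delta_eq_A[OF ind that] .
  have dJM: "delta L alpha ?J Z = delta L alpha RM Z" if "Z \<subseteq> UM" for Z
    using delta_join_M[OF sB ind assms(8) that] .
  have posM: "0 \<le> delta L alpha RM Z" if "finite Z" "Z \<subseteq> UM" for Z
  proof -
    have "in_K L ar alpha Z (induced RM Z)" using assms(5) that unfolding models_Sforall_def by auto
    then have "0 \<le> delta L alpha (induced (induced RM Z) Z) Z" unfolding in_K_def by auto
    then show ?thesis using delta_induced[of Z Z L alpha "induced RM Z"] delta_induced[of Z Z L alpha RM] by simp
  qed
  have posB: "0 \<le> delta L alpha RB Z" if "Z \<subseteq> UB" for Z
  proof -
    have "0 \<le> delta L alpha (induced RB Z) Z" using assms(7) that unfolding in_K_def by auto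
    then show ?thesis using delta_induced[of Z Z L alpha RB] by simp
  qed
  have P1: "models_Sforall L ar alpha ?N ?J"
    if h: "strong L alpha RB UA UB \<or> strong L alpha RM UA UM"
  proof -
    have nonneg: "0 \<le> delta L alpha ?J Y" if "finite Y" "Y \<subseteq> ?N" for Y
    proof -
      have d: "delta L alpha ?J Y + delta L alpha RM (Y \<inter> UA)
          = delta L alpha RM (Y \<inter> UM) + delta L alpha RB (Y \<inter> UB)" using D that .
      have fY: "finite (Y \<inter> UM)" "finite (Y \<inter> UB)" using that by auto
      have p1: "0 \<le> delta L alpha RM (Y \<inter> UM)" using posM fY by auto
      have p2: "0 \<le> delta L alpha RB (Y \<inter> UB)" using posB by auto
      from h show ?thesis
      proof
        assume s: "strong L alpha RB UA UB"
        have "delta L alpha RB (Y \<inter> UB \<inter> UA) \<le> delta L alpha RB (Y \<inter> UB)"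
          using strong_key[OF s _ fY(2) al] by auto
        moreover have "Y \<inter> UB \<inter> UA = Y \<inter> UA" using AB by auto
        moreover have "delta L alpha RB (Y \<inter> UA) = delta L alpha RM (Y \<inter> UA)" using dBA by auto
        ultimately have "delta L alpha RM (Y \<inter> UA) \<le> delta L alpha RB (Y \<inter> UB)" by simp
        then show ?thesis using d p1 by linarith
      next
        assume s: "strong L alpha RM UA UM"
        have "delta L alpha RM (Y \<inter> UM \<inter> UA) \<le> delta L alpha RM (Y \<inter> UM)"
          using strong_key[OF s _ fY(1) al] by auto
        moreover have "Y \<inter> UM \<inter> UA = Y \<inter> UA" using AM by auto
        ultimately have "delta L alpha RM (Y \<inter> UA) \<le> delta L alpha RM (Y \<inter> UM)" by simp
        then show ?thesis using d p2 by linarith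
      qed
    qed
    show ?thesis unfolding models_Sforall_def
    proof (intro conjI allI impI)
      show "is_struct L ar ?N ?J" by (rule sJ)
    next
      fix X assume X: "X \<subseteq> ?N \<and> finite X"
      show "in_K L ar alpha X (induced ?J X)" unfolding in_K_def
      proof (intro conjI allI impI)
        show "is_struct L ar X (induced ?J X)"
          using sJ unfolding is_struct_def induced_def by auto
        show "finite X" using X by auto
      next
        fix Y assume "Y \<subseteq> X"
        then show "0 \<le> delta L alpha (induced (induced ?J X) Y) Y"
          using delta_induced[of Y Y L alpha "induced ?J X"] delta_induced[of Y X L alpha ?J] nonneg[of Y] X finite_subset[of Y X] by auto
      qed
    qed
  qed
  have DB: "delta L alpha ?J C = delta L alpha RM (C \<inter> UM) + delta L alpha RB UB - delta L alpha RM UA"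
    if "finite C" "UB \<subseteq> C" "C \<subseteq> ?N" for C
  proof -
    have "C \<inter> UA = UA" "C \<inter> UB = UB" using that AB by auto
    then show ?thesis using D[OF that(1,3)] by simp
  qed
  have P3: "strong L alpha ?J UB ?N" if s: "strong L alpha RM UA UM"
    unfolding strong_def
  proof (intro conjI allI impI)
    show "UB \<subseteq> ?N" by auto
    show "finite UB" by (rule fB)
  next
    fix C assume C: "UB \<subseteq> C \<and> C \<subseteq> ?N \<and> finite C"
    have e1: "delta L alpha ?J UB = delta L alpha RB UB"
      using DB[of UB] fB assms(8) by (simp add: Int_commute)
    have "delta L alpha RM UA \<le> delta L alpha RM (C \<inter> UM)"
      using s C AB AM unfolding strong_def by auto
    then show "delta L alpha ?J UB \<le> delta L alpha ?J C" using DB[of C] C e1 by auto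
  qed
  have P4: "finite_closures L alpha ?N ?J" if fc: "finite_closures L alpha UM RM"
    unfolding finite_closures_def
  proof (intro allI impI)
    fix F assume F: "F \<subseteq> ?N \<and> finite F"
    have "F \<inter> UM \<union> UA \<subseteq> UM \<and> finite (F \<inter> UM \<union> UA)" using F fA AM by auto
    then have "\<exists>G. F \<inter> UM \<union> UA \<subseteq> G \<and> G \<subseteq> UM \<and> finite G \<and> strong L alpha RM G UM"
      using fc[unfolded finite_closures_def, rule_format] by presburger
    then obtain G where G: "F \<inter> UM \<union> UA \<subseteq> G" "G \<subseteq> UM" "finite G" "strong L alpha RM G UM"
      by blast
    have GU: "(G \<union> UB) \<inter> UM = G" using G(1,2) assms(8) by blast
    show "\<exists>G'. F \<subseteq> G' \<and> G' \<subseteq> ?N \<and> finite G' \<and> strong L alpha ?J G' ?N"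
    proof (rule exI[of _ "G \<union> UB"], intro conjI)
      show "F \<subseteq> G \<union> UB" using F G(1) by auto
      show "G \<union> UB \<subseteq> ?N" using G(2) by auto
      show "finite (G \<union> UB)" using G(3) fB by auto
      show "strong L alpha ?J (G \<union> UB) ?N" unfolding strong_def
      proof (intro conjI allI impI)
        show "G \<union> UB \<subseteq> ?N" using G(2) by auto
        show "finite (G \<union> UB)" using G(3) fB by auto
      next
        fix C assume C: "G \<union> UB \<subseteq> C \<and> C \<subseteq> ?N \<and> finite C"
        have "delta L alpha RM G \<le> delta L alpha RM (C \<inter> UM)"
          using G(4) C G(2) unfolding strong_def by auto
        moreover have "delta L alpha ?J (G \<union> UB) = delta L alpha RM G + delta L alpha RB UB - delta L alpha RM UA"
          using DB[of "G \<union> UB"] GU G(2,3) fB by auto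
        ultimately show "delta L alpha ?J (G \<union> UB) \<le> delta L alpha ?J C"
          using DB[of C] C by auto
      qed
    qed
  qed
  have sJM: "strong L alpha ?J A C \<longleftrightarrow> strong L alpha RM A C" if "C \<subseteq> UM" for A C
  proof -
    have eqs: "\<And>Z. Z \<subseteq> C \<Longrightarrow> delta L alpha ?J Z = delta L alpha RM Z" using dJM that by auto
    show ?thesis
    proof (cases "A \<subseteq> C")
      case True
      then have "delta L alpha ?J A = delta L alpha RM A" using eqs by auto
      then show ?thesis unfolding strong_def using eqs by auto
    next
      case False
      then show ?thesis unfolding strong_def by auto
    qed
  qed
  have P2: "preserves_closures L alpha UM RM ?N ?J" if s: "strong L alpha RB UA UB"
    unfolding preserves_closures_def
  proof (intro allI impI)
    fix X assume X: "X \<subseteq> UM \<and> closed_in L alpha UM RM X"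
    show "closed_in L alpha ?N ?J X" unfolding closed_in_def
    proof (intro conjI allI impI)
      show "X \<subseteq> ?N" using X by auto
    next
      fix A' B' assume h: "A' \<subseteq> X \<and> finite A' \<and> B' \<subseteq> ?N \<and> min_pair L alpha ?J A' B'"
      have mp: "A' \<subseteq> B'" "finite B'" "\<forall>C. A' \<subseteq> C \<and> C \<subset> B' \<longrightarrow> strong L alpha ?J A' C"
            "\<not> strong L alpha ?J A' B'"
          using h unfolding min_pair_def by auto
      show "B' \<subseteq> X"
      proof (cases "B' \<subseteq> UM")
        case True
        have "min_pair L alpha RM A' B'"
          unfolding min_pair_def
        proof (intro conjI allI impI)
          show "A' \<subseteq> B'" "finite B'" using mp by auto
          show "\<not> strong L alpha RM A' B'" using mp(4) sJM[OF True] by simp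
        next
          fix C assume c: "A' \<subseteq> C \<and> C \<subset> B'"
          then have cu: "C \<subseteq> UM" using True by blast
          have "strong L alpha ?J A' C" using mp(3) c by blast
          then show "strong L alpha RM A' C" using sJM[OF cu] by simp
        qed
        then show ?thesis using X h True unfolding closed_in_def by blast
      next
        case False
        let ?B1 = "B' \<inter> UM"
        have "A' \<subseteq> ?B1" using h X mp(1) by auto
        moreover have "?B1 \<subset> B'" using False by auto
        ultimately have sB1: "strong L alpha ?J A' ?B1" using mp(3) by auto
        obtain C where C: "A' \<subseteq> C" "C \<subseteq> B'" "finite C" "delta L alpha ?J C < delta L alpha ?J A'"
          using mp(4) mp(1) h unfolding strong_def by (auto simp: not_le)
        have CN: "C \<subseteq> ?N" using C(2) h by auto
        have "delta L alpha RB (C \<inter> UB \<inter> UA) \<le> delta L alpha RB (C \<inter> UB)"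
          using strong_key[OF s _ _ al] C(3) by auto
        moreover have "C \<inter> UB \<inter> UA = C \<inter> UA" using AB by auto
        moreover have "delta L alpha RB (C \<inter> UA) = delta L alpha RM (C \<inter> UA)" using dBA by auto
        ultimately have "delta L alpha RM (C \<inter> UA) \<le> delta L alpha RB (C \<inter> UB)" by simp
        then have "delta L alpha RM (C \<inter> UM) \<le> delta L alpha ?J C"
          using D[OF C(3) CN] by linarith
        moreover have "delta L alpha ?J (C \<inter> UM) = delta L alpha RM (C \<inter> UM)" using dJM by auto
        moreover have "delta L alpha ?J A' \<le> delta L alpha ?J (C \<inter> UM)"
        proof -
          have q: "\<forall>C'. A' \<subseteq> C' \<and> C' \<subseteq> ?B1 \<and> finite C' \<longrightarrow> delta L alpha ?J A' \<le> delta L alpha ?J C'"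
            using sB1 unfolding strong_def by blast
          have "A' \<subseteq> C \<inter> UM" using C(1) h X by blast
          moreover have "C \<inter> UM \<subseteq> ?B1" using C(2) by blast
          moreover have "finite (C \<inter> UM)" using C(3) by blast
          ultimately show ?thesis using q by blast
        qed
        ultimately show ?thesis using C(4) by linarith
      qed
    qed
  qed
  show ?thesis using P1 P2 P3 P4 by blast
qed

end
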